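(* Let $0\le\alpha<\tfrac12$ and let $D$ be a distribution on $\{0,1\}^n$ given by a tree BN (every node has at most one parent and the underlying graph is a rooted tree) with all conditional probabilities in $(0,1)$ that is $\alpha$-difference bounded. Then every conjunction $f$ of $d$ literals satisfies $$L_1(f)\le\left(\frac{2-2\alpha}{1-2\alpha}\right)^{2d}.$$
   Context: For a BN with parent sets $\operatorname{pa}(v)$, let $\mu_{v,x_{\operatorname{pa}(v)}}=P(X_v=1\mid X_{\operatorname{pa}(v)}=x_{\operatorname{pa}(v)})$ and $\sigma_{v,x_{\operatorname{pa}(v)}}=\sqrt{\mu_{v,x_{\operatorname{pa}(v)}}(1-\mu_{v,x_{\operatorname{pa}(v)}})}$. The BN is $\alpha$-difference bounded if for every $v$ and every two assignments $x,y$ to $\operatorname{pa}(v)$, $|\mu_{v,x}-\mu_{v,y}|\le\alpha$ and $|\sigma_{v,x}-\sigma_{v,y}|\le\alpha$. The BN-induced basis is $\phi_v(x)=(x_v-\mu_{v,x_{\operatorname{pa}(v)}})/\sigma_{v,x_{\operatorname{pa}(v)}}$, $\phi_S=\prod_{v\in S}\phi_v$; $\hat f_S=\mathbb{E}_D[f(X)\phi_S(X)]$; $L_1(f)=\sum_{S\subseteq[n]}|\hat f_S|$. A conjunction of $d$ literals is $f(x)=\prod_{i\in T_1}x_i\prod_{j\in T_0}(1-x_j)$ with $T_0,T_1$ disjoint and $|T_0\cup T_1|=d$. *)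

theory Defs
  imports "HOL-Analysis.Analysis" "HOL-Library.FuncSet"
begin

text \<open>The parent structure of a
  tree BN is a partial map par :: nat => nat option (at most one parent per node).
  p v b is the conditional probability P(X_v = 1 | X_par(v) = b); for a root only
  p v False is used (the empty parent assignment).\<close>

definition cube :: "nat \<Rightarrow> (nat \<Rightarrow> bool) set" where
  "cube n = PiE {0..<n} (\<lambda>_. UNIV)"

definition pa_val :: "(nat \<Rightarrow> nat option) \<Rightarrow> (nat \<Rightarrow> bool) \<Rightarrow> nat \<Rightarrow> bool" where
  "pa_val par x v = (case par v of None \<Rightarrow> False | Some u \<Rightarrow> x u)"

definition bn_mu :: "(nat \<Rightarrow> nat option) \<Rightarrow> (nat \<Rightarrow> bool \<Rightarrow> real) \<Rightarrow> (nat \<Rightarrow> bool) \<Rightarrow> nat \<Rightarrow> real" where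
  "bn_mu par p x v = p v (pa_val par x v)"

definition bn_sigma :: "(nat \<Rightarrow> nat option) \<Rightarrow> (nat \<Rightarrow> bool \<Rightarrow> real) \<Rightarrow> (nat \<Rightarrow> bool) \<Rightarrow> nat \<Rightarrow> real" where
  "bn_sigma par p x v = sqrt (bn_mu par p x v * (1 - bn_mu par p x v))"

definition bn_prob :: "nat \<Rightarrow> (nat \<Rightarrow> nat option) \<Rightarrow> (nat \<Rightarrow> bool \<Rightarrow> real) \<Rightarrow> (nat \<Rightarrow> bool) \<Rightarrow> real" where
  "bn_prob n par p x = (\<Prod>v<n. if x v then bn_mu par p x v else 1 - bn_mu par p x v)"

definition bn_expect :: "nat \<Rightarrow> (nat \<Rightarrow> nat option) \<Rightarrow> (nat \<Rightarrow> bool \<Rightarrow> real) \<Rightarrow> ((nat \<Rightarrow> bool) \<Rightarrow> real) \<Rightarrow> real" where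
  "bn_expect n par p g = (\<Sum>x\<in>cube n. bn_prob n par p x * g x)"

definition bn_phi :: "(nat \<Rightarrow> nat option) \<Rightarrow> (nat \<Rightarrow> bool \<Rightarrow> real) \<Rightarrow> nat \<Rightarrow> (nat \<Rightarrow> bool) \<Rightarrow> real" where
  "bn_phi par p v x = (of_bool (x v) - bn_mu par p x v) / bn_sigma par p x v"

definition bn_phiS :: "(nat \<Rightarrow> nat option) \<Rightarrow> (nat \<Rightarrow> bool \<Rightarrow> real) \<Rightarrow> nat set \<Rightarrow> (nat \<Rightarrow> bool) \<Rightarrow> real" where
  "bn_phiS par p S x = (\<Prod>v\<in>S. bn_phi par p v x)"

definition bn_coeff :: "nat \<Rightarrow> (nat \<Rightarrow> nat option) \<Rightarrow> (nat \<Rightarrow> bool \<Rightarrow> real) \<Rightarrow> ((nat \<Rightarrow> bool) \<Rightarrow> real) \<Rightarrow> nat set \<Rightarrow> real" where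
  "bn_coeff n par p f S = bn_expect n par p (\<lambda>x. f x * bn_phiS par p S x)"

definition bn_L1 :: "nat \<Rightarrow> (nat \<Rightarrow> nat option) \<Rightarrow> (nat \<Rightarrow> bool \<Rightarrow> real) \<Rightarrow> ((nat \<Rightarrow> bool) \<Rightarrow> real) \<Rightarrow> real" where
  "bn_L1 n par p f = (\<Sum>S\<in>Pow {0..<n}. \<bar>bn_coeff n par p f S\<bar>)"

definition is_tree :: "nat \<Rightarrow> (nat \<Rightarrow> nat option) \<Rightarrow> bool" where
  "is_tree n par \<longleftrightarrow>
     (\<forall>v<n. \<forall>u. par v = Some u \<longrightarrow> u < n) \<and>
     (\<exists>r::nat \<Rightarrow> nat. \<forall>v<n. \<forall>u. par v = Some u \<longrightarrow> r u < r v) \<and>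
     card {v. v < n \<and> par v = None} = 1"

definition cpt_open :: "nat \<Rightarrow> (nat \<Rightarrow> nat option) \<Rightarrow> (nat \<Rightarrow> bool \<Rightarrow> real) \<Rightarrow> bool" where
  "cpt_open n par p \<longleftrightarrow>
     (\<forall>v<n. (par v = None \<longrightarrow> 0 < p v False \<and> p v False < 1) \<and>
            (par v \<noteq> None \<longrightarrow> (\<forall>b. 0 < p v b \<and> p v b < 1)))"

definition diff_bounded :: "real \<Rightarrow> nat \<Rightarrow> (nat \<Rightarrow> nat option) \<Rightarrow> (nat \<Rightarrow> bool \<Rightarrow> real) \<Rightarrow> bool" where
  "diff_bounded \<alpha> n par p \<longleftrightarrow>
     (\<forall>v<n. \<forall>x y. \<bar>bn_mu par p x v - bn_mu par p y v\<bar> \<le> \<alpha> \<and>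
                  \<bar>bn_sigma par p x v - bn_sigma par p y v\<bar> \<le> \<alpha>)"

definition conjunction :: "nat set \<Rightarrow> nat set \<Rightarrow> (nat \<Rightarrow> bool) \<Rightarrow> real" where
  "conjunction T0 T1 x = (\<Prod>i\<in>T1. of_bool (x i)) * (\<Prod>j\<in>T0. 1 - of_bool (x j))"

end

theory Submission
  imports Defs
begin


definition probV :: "(nat \<Rightarrow> nat option) \<Rightarrow> (nat \<Rightarrow> bool \<Rightarrow> real) \<Rightarrow> nat set \<Rightarrow> (nat \<Rightarrow> bool) \<Rightarrow> real" where
  "probV par p V x = (\<Prod>w\<in>V. if x w then bn_mu par p x w else 1 - bn_mu par p x w)"

definition EV :: "(nat \<Rightarrow> nat option) \<Rightarrow> (nat \<Rightarrow> bool \<Rightarrow> real) \<Rightarrow> nat set \<Rightarrow> ((nat \<Rightarrow> bool) \<Rightarrow> real) \<Rightarrow> real" where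
  "EV par p V g = (\<Sum>x\<in>PiE V (\<lambda>_. UNIV). probV par p V x * g x)"

definition coeffV :: "(nat \<Rightarrow> nat option) \<Rightarrow> (nat \<Rightarrow> bool \<Rightarrow> real) \<Rightarrow> nat set \<Rightarrow> ((nat \<Rightarrow> bool) \<Rightarrow> real) \<Rightarrow> nat set \<Rightarrow> real" where
  "coeffV par p V f S = EV par p V (\<lambda>x. f x * bn_phiS par p S x)"

definition L1V :: "(nat \<Rightarrow> nat option) \<Rightarrow> (nat \<Rightarrow> bool \<Rightarrow> real) \<Rightarrow> nat set \<Rightarrow> ((nat \<Rightarrow> bool) \<Rightarrow> real) \<Rightarrow> real" where
  "L1V par p V f = (\<Sum>S\<in>Pow V. \<bar>coeffV par p V f S\<bar>)"

definition indep :: "nat \<Rightarrow> ((nat \<Rightarrow> bool) \<Rightarrow> real) \<Rightarrow> bool" where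
  "indep v h \<longleftrightarrow> (\<forall>x b. h (x(v:=b)) = h x)"

lemma mu_upd: "par w \<noteq> Some v \<Longrightarrow> bn_mu par p (x(v:=b)) w = bn_mu par p x w"
  by (auto simp: bn_mu_def pa_val_def split: option.splits)

lemma sigma_upd: "par w \<noteq> Some v \<Longrightarrow> bn_sigma par p (x(v:=b)) w = bn_sigma par p x w"
  by (simp add: bn_sigma_def mu_upd)

lemma phi_upd: "par w \<noteq> Some v \<Longrightarrow> w \<noteq> v \<Longrightarrow> bn_phi par p w (x(v:=b)) = bn_phi par p w x"
  by (simp add: bn_phi_def mu_upd sigma_upd)

lemma phiS_indep: "\<forall>w\<in>S. par w \<noteq> Some v \<Longrightarrow> v \<notin> S \<Longrightarrow> indep v (bn_phiS par p S)"
  unfolding indep_def bn_phiS_def by (metis (no_types, lifting) phi_upd prod.cong)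

lemma EV_insert:
  assumes fin: "finite V" and nv: "v \<notin> V" and leaf: "\<forall>w\<in>V. par w \<noteq> Some v" and pv: "par v \<noteq> Some v"
  shows "EV par p (insert v V) g = EV par p V (\<lambda>y. bn_mu par p y v * g (y(v:=True)) + (1 - bn_mu par p y v) * g (y(v:=False)))"
proof -
  have pr: "probV par p (insert v V) (y(v:=b)) = (if b then bn_mu par p y v else 1 - bn_mu par p y v) * probV par p V y" for y b
  proof -
    have "(\<Prod>w\<in>V. if (y(v:=b)) w then bn_mu par p (y(v:=b)) w else 1 - bn_mu par p (y(v:=b)) w)
        = (\<Prod>w\<in>V. if y w then bn_mu par p y w else 1 - bn_mu par p y w)"
      apply (rule prod.cong, simp)
      using nv leaf by (auto simp: mu_upd)
    then show ?thesis unfolding probV_def using fin nv pv by (simp add: mu_upd)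
  qed
  have "EV par p (insert v V) g = (\<Sum>x\<in>(\<lambda>(y, g). g(v := y)) ` (UNIV \<times> PiE V (\<lambda>_. UNIV)). probV par p (insert v V) x * g x)"
    unfolding EV_def PiE_insert_eq by simp
  also have "\<dots> = (\<Sum>z\<in>UNIV \<times> PiE V (\<lambda>_. UNIV). probV par p (insert v V) ((snd z)(v:=fst z)) * g ((snd z)(v:=fst z)))"
    apply (subst sum.reindex)
    using inj_combinator[OF nv, of "\<lambda>_. UNIV"] by (auto simp: case_prod_beta)
  also have "\<dots> = (\<Sum>b\<in>UNIV. \<Sum>y\<in>PiE V (\<lambda>_. UNIV). probV par p (insert v V) (y(v:=b)) * g (y(v:=b)))"
    by (subst sum.cartesian_product) (simp add: case_prod_beta)
  also have "\<dots> = (\<Sum>y\<in>PiE V (\<lambda>_. UNIV). \<Sum>b\<in>UNIV. probV par p (insert v V) (y(v:=b)) * g (y(v:=b)))"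
    by (rule sum.swap)
  also have "\<dots> = EV par p V (\<lambda>y. bn_mu par p y v * g (y(v:=True)) + (1 - bn_mu par p y v) * g (y(v:=False)))"
    unfolding EV_def UNIV_bool pr by (intro sum.cong) (auto simp: algebra_simps)
  finally show ?thesis .
qed

locale leafctx =
  fixes par :: "nat \<Rightarrow> nat option" and p :: "nat \<Rightarrow> bool \<Rightarrow> real" and V :: "nat set" and v :: nat
  assumes fin: "finite V" and nv: "v \<notin> V" and leaf: "\<forall>w\<in>V. par w \<noteq> Some v" and pv: "par v \<noteq> Some v"
    and mu01: "\<forall>x. 0 < bn_mu par p x v \<and> bn_mu par p x v < 1"
begin

lemma E_ins: "EV par p (insert v V) g = EV par p V (\<lambda>y. bn_mu par p y v * g (y(v:=True)) + (1 - bn_mu par p y v) * g (y(v:=False)))"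
  using EV_insert[OF fin nv leaf pv] .

lemma phiv: "bn_phi par p v (y(v:=b)) = (of_bool b - bn_mu par p y v) / bn_sigma par p y v"
  by (simp add: bn_phi_def mu_upd sigma_upd pv)

lemma sig2: "bn_sigma par p y v ^ 2 = bn_mu par p y v * (1 - bn_mu par p y v)"
  using mu01[rule_format, of y] by (simp add: bn_sigma_def)

lemma sigpos: "bn_sigma par p y v > 0"
  using mu01 by (simp add: bn_sigma_def)

lemma C1: "indep v h \<Longrightarrow> EV par p (insert v V) h = EV par p V h"
  unfolding E_ins unfolding indep_def EV_def by (intro sum.cong) (auto simp: algebra_simps)

lemma C2: "indep v h \<Longrightarrow> EV par p (insert v V) (\<lambda>x. h x * bn_phi par p v x) = 0"
proof -
  assume h: "indep v h"
  have "\<And>y. bn_mu par p y v * (h (y(v:=True)) * bn_phi par p v (y(v:=True))) + (1 - bn_mu par p y v) * (h (y(v:=False)) * bn_phi par p v (y(v:=False))) = 0"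
    using h unfolding indep_def phiv by (simp add: field_simps)
  then show ?thesis unfolding E_ins unfolding EV_def by simp
qed

lemma C3: "indep v h \<Longrightarrow> EV par p (insert v V) (\<lambda>x. h x * bn_phi par p v x * bn_phi par p v x) = EV par p V h"
proof -
  assume h: "indep v h"
  have "bn_mu par p y v * (h (y(v:=True)) * bn_phi par p v (y(v:=True)) * bn_phi par p v (y(v:=True))) + (1 - bn_mu par p y v) * (h (y(v:=False)) * bn_phi par p v (y(v:=False)) * bn_phi par p v (y(v:=False))) = h y" for y
  proof -
    have s: "bn_sigma par p y v * bn_sigma par p y v = bn_mu par p y v * (1 - bn_mu par p y v)"
      using sig2[of y] by (simp add: power2_eq_square)
    have ne: "bn_sigma par p y v \<noteq> 0" using sigpos[of y] by simp
    have "bn_mu par p y v * (h (y(v:=True)) * bn_phi par p v (y(v:=True)) * bn_phi par p v (y(v:=True))) + (1 - bn_mu par p y v) * (h (y(v:=False)) * bn_phi par p v (y(v:=False)) * bn_phi par p v (y(v:=False)))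
      = h y * (bn_mu par p y v * (1 - bn_mu par p y v)) / (bn_sigma par p y v * bn_sigma par p y v)"
      using h unfolding indep_def phiv using ne by (simp add: field_simps)
    also have "\<dots> = h y" unfolding s using mu01[rule_format, of y] by simp
    finally show ?thesis .
  qed
  then show ?thesis unfolding E_ins unfolding EV_def by simp
qed

lemma indep_mult: "indep v a \<Longrightarrow> indep v b \<Longrightarrow> indep v (\<lambda>x. a x * b x)"
  by (simp add: indep_def)

lemma phiS_ind: "S \<subseteq> V \<Longrightarrow> indep v (bn_phiS par p S)"
  using leaf nv by (intro phiS_indep) auto

lemma phiS_ins: "S \<subseteq> V \<Longrightarrow> bn_phiS par p (insert v S) x = bn_phi par p v x * bn_phiS par p S x"
  unfolding bn_phiS_def using nv fin by (subst prod.insert) (auto dest: finite_subset)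

lemma L1_split: "L1V par p (insert v V) f = (\<Sum>S\<in>Pow V. \<bar>coeffV par p (insert v V) f S\<bar>) + (\<Sum>S\<in>Pow V. \<bar>coeffV par p (insert v V) f (insert v S)\<bar>)"
proof -
  have d: "Pow V \<inter> insert v ` Pow V = {}" using nv by auto
  have i: "inj_on (insert v) (Pow V)" using nv unfolding inj_on_def by (metis PowD insert_absorb insert_ident subset_iff)
  show ?thesis unfolding L1V_def Pow_insert
    using fin d i by (simp add: sum.union_disjoint sum.reindex)
qed

lemma P1: assumes h: "indep v h" shows "L1V par p (insert v V) h = L1V par p V h"
proof -
  have a: "coeffV par p (insert v V) h S = coeffV par p V h S" if "S \<in> Pow V" for S
    unfolding coeffV_def using that by (intro C1 indep_mult h phiS_ind) auto
  have b: "coeffV par p (insert v V) h (insert v S) = 0" if "S \<in> Pow V" for S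
  proof -
    have "coeffV par p (insert v V) h (insert v S) = EV par p (insert v V) (\<lambda>x. (h x * bn_phiS par p S x) * bn_phi par p v x)"
      unfolding coeffV_def using that by (simp add: phiS_ins algebra_simps)
    also have "\<dots> = 0" using that by (intro C2 indep_mult h phiS_ind) auto
    finally show ?thesis .
  qed
  show ?thesis unfolding L1_split using a b by (simp add: L1V_def)
qed

lemma P2: assumes h: "indep v h" shows "L1V par p (insert v V) (\<lambda>x. h x * bn_phi par p v x) = L1V par p V h"
proof -
  have a: "coeffV par p (insert v V) (\<lambda>x. h x * bn_phi par p v x) S = 0" if "S \<in> Pow V" for S
  proof -
    have "coeffV par p (insert v V) (\<lambda>x. h x * bn_phi par p v x) S = EV par p (insert v V) (\<lambda>x. (h x * bn_phiS par p S x) * bn_phi par p v x)"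
      unfolding coeffV_def by (simp add: algebra_simps)
    also have "\<dots> = 0" using that by (intro C2 indep_mult h phiS_ind) auto
    finally show ?thesis .
  qed
  have b: "coeffV par p (insert v V) (\<lambda>x. h x * bn_phi par p v x) (insert v S) = coeffV par p V h S" if "S \<in> Pow V" for S
  proof -
    have "coeffV par p (insert v V) (\<lambda>x. h x * bn_phi par p v x) (insert v S) = EV par p (insert v V) (\<lambda>x. (h x * bn_phiS par p S x) * bn_phi par p v x * bn_phi par p v x)"
      unfolding coeffV_def using that by (simp add: phiS_ins algebra_simps)
    also have "\<dots> = coeffV par p V h S" unfolding coeffV_def using that by (intro C3 indep_mult h phiS_ind) auto
    finally show ?thesis .
  qed
  show ?thesis unfolding L1_split using a b by (simp add: L1V_def)
qed

end

lemma coeffV_add: "coeffV par p V (\<lambda>x. f x + g x) S = coeffV par p V f S + coeffV par p V g S"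
  unfolding coeffV_def EV_def by (simp add: algebra_simps sum.distrib)

lemma coeffV_scale: "coeffV par p V (\<lambda>x. c * f x) S = c * coeffV par p V f S"
  unfolding coeffV_def EV_def by (simp add: algebra_simps sum_distrib_left)

lemma L1V_add: "L1V par p V (\<lambda>x. f x + g x) \<le> L1V par p V f + L1V par p V g"
  unfolding L1V_def coeffV_add sum.distrib[symmetric] by (intro sum_mono abs_triangle_ineq)

lemma L1V_scale: "L1V par p V (\<lambda>x. c * f x) = \<bar>c\<bar> * L1V par p V f"
  unfolding L1V_def coeffV_scale by (simp add: abs_mult sum_distrib_left)


lemma L1V_nonneg: "0 \<le> L1V par p V f"
  unfolding L1V_def by (simp add: sum_nonneg)

lemma (in leafctx) decomp_bound:
  assumes ig: "indep v g" and ih: "indep v h"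
    and f: "\<And>x. f x = A0 * g x + A1 * h x + B0 * (g x * bn_phi par p v x) + B1 * (h x * bn_phi par p v x)"
  shows "L1V par p (insert v V) f \<le> \<bar>A0\<bar> * L1V par p V g + \<bar>A1\<bar> * L1V par p V h + \<bar>B0\<bar> * L1V par p V g + \<bar>B1\<bar> * L1V par p V h"
proof -
  let ?U = "insert v V"
  have fe: "f = (\<lambda>x. ((A0 * g x + A1 * h x) + B0 * (g x * bn_phi par p v x)) + B1 * (h x * bn_phi par p v x))"
    using f by (auto simp: fun_eq_iff)
  have "L1V par p ?U f \<le> L1V par p ?U (\<lambda>x. (A0 * g x + A1 * h x) + B0 * (g x * bn_phi par p v x)) + L1V par p ?U (\<lambda>x. B1 * (h x * bn_phi par p v x))"
    unfolding fe by (rule L1V_add)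
  also have "\<dots> \<le> (L1V par p ?U (\<lambda>x. A0 * g x + A1 * h x) + L1V par p ?U (\<lambda>x. B0 * (g x * bn_phi par p v x))) + L1V par p ?U (\<lambda>x. B1 * (h x * bn_phi par p v x))"
    by (intro add_right_mono L1V_add)
  also have "\<dots> \<le> ((L1V par p ?U (\<lambda>x. A0 * g x) + L1V par p ?U (\<lambda>x. A1 * h x)) + L1V par p ?U (\<lambda>x. B0 * (g x * bn_phi par p v x))) + L1V par p ?U (\<lambda>x. B1 * (h x * bn_phi par p v x))"
    by (intro add_right_mono L1V_add)
  also have "\<dots> = \<bar>A0\<bar> * L1V par p V g + \<bar>A1\<bar> * L1V par p V h + \<bar>B0\<bar> * L1V par p V g + \<bar>B1\<bar> * L1V par p V h"
    unfolding L1V_scale P1[OF ig] P1[OF ih] P2[OF ig] P2[OF ih] by simp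
  finally show ?thesis .
qed

lemma (in leafctx) step:
  assumes ig: "indep v g" and ih: "indep v h"
    and f: "\<And>x. f x = A0 * g x + A1 * h x + B0 * (g x * bn_phi par p v x) + B1 * (h x * bn_phi par p v x)"
    and gb: "L1V par p V g \<le> K ^ d" and hb: "(A1 = 0 \<and> B1 = 0) \<or> L1V par p V h \<le> K ^ Suc d"
    and a0: "\<bar>A0\<bar> \<le> 1" and b0: "\<bar>B0\<bar> \<le> 1" and a1: "\<bar>A1\<bar> \<le> \<alpha>" and b1: "\<bar>B1\<bar> \<le> \<alpha>"
    and K1: "1 \<le> K" and K2: "2 + 2 * \<alpha> * K \<le> K" and al: "0 \<le> \<alpha>"
  shows "L1V par p (insert v V) f \<le> K ^ Suc d"
proof -
  have gn: "0 \<le> L1V par p V g" and hn: "0 \<le> L1V par p V h" by (rule L1V_nonneg)+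
  have Kd: "0 \<le> K ^ d" using K1 by simp
  have t0: "\<bar>A0\<bar> * L1V par p V g \<le> K ^ d"
    using mult_mono[OF a0 gb] gn by simp
  have t1: "\<bar>B0\<bar> * L1V par p V g \<le> K ^ d"
    using mult_mono[OF b0 gb] gn by simp
  have t2: "\<bar>A1\<bar> * L1V par p V h \<le> \<alpha> * K ^ Suc d"
    using hb proof
    assume "A1 = 0 \<and> B1 = 0" then show ?thesis using al K1 by simp
  next
    assume hh: "L1V par p V h \<le> K ^ Suc d" then show ?thesis using mult_mono[OF a1 hh] hn al by simp
  qed
  have t3: "\<bar>B1\<bar> * L1V par p V h \<le> \<alpha> * K ^ Suc d"
    using hb proof
    assume "A1 = 0 \<and> B1 = 0" then show ?thesis using al K1 by simp
  next
    assume hh: "L1V par p V h \<le> K ^ Suc d" then show ?thesis using mult_mono[OF b1 hh] hn al by simp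
  qed
  have "L1V par p (insert v V) f \<le> 2 * K ^ d + 2 * \<alpha> * K ^ Suc d"
    using decomp_bound[OF ig ih f] t0 t1 t2 t3 by linarith
  also have "\<dots> = K ^ d * (2 + 2 * \<alpha> * K)" by (simp add: algebra_simps)
  also have "\<dots> \<le> K ^ d * K" using K2 Kd by (rule mult_left_mono)
  finally show ?thesis by (simp add: mult.commute)
qed



lemma mu_if: "bn_mu par p x v = (if x (the (par v)) then bn_mu par p (\<lambda>_. True) v else bn_mu par p (\<lambda>_. False) v)"
  by (cases "par v") (auto simp: bn_mu_def pa_val_def)

lemma sigma_if: "bn_sigma par p x v = (if x (the (par v)) then bn_sigma par p (\<lambda>_. True) v else bn_sigma par p (\<lambda>_. False) v)"
  unfolding bn_sigma_def by (cases "x (the (par v))") (simp_all add: mu_if[of par p x v])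

lemma root_const: "par v = None \<Longrightarrow> bn_mu par p x v = bn_mu par p y v"
  by (simp add: bn_mu_def pa_val_def)

lemma lit_decomp:
  assumes mu01: "\<forall>x. 0 < bn_mu par p x v \<and> bn_mu par p x v < 1"
    and db: "\<forall>x y. \<bar>bn_mu par p x v - bn_mu par p y v\<bar> \<le> \<alpha> \<and> \<bar>bn_sigma par p x v - bn_sigma par p y v\<bar> \<le> \<alpha>"
  shows "\<exists>A0 A1 B0 B1. 0 \<le> A0 \<and> A0 \<le> 1 \<and> \<bar>B0\<bar> \<le> 1 \<and> \<bar>A1\<bar> \<le> \<alpha> \<and> \<bar>B1\<bar> \<le> \<alpha> \<and>
     (par v = None \<longrightarrow> A1 = 0 \<and> B1 = 0) \<and>
     (\<forall>x. of_bool (x v) = A0 + A1 * of_bool (x (the (par v))) + (B0 + B1 * of_bool (x (the (par v)))) * bn_phi par p v x)"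
proof -
  define F :: "nat \<Rightarrow> bool" where "F = (\<lambda>_. False)"
  define Tr :: "nat \<Rightarrow> bool" where "Tr = (\<lambda>_. True)"
  define A0 where "A0 = bn_mu par p F v"
  define B0 where "B0 = bn_sigma par p F v"
  define A1 where "A1 = bn_mu par p Tr v - bn_mu par p F v"
  define B1 where "B1 = bn_sigma par p Tr v - bn_sigma par p F v"
  have m: "bn_mu par p x v = A0 + A1 * of_bool (x (the (par v)))" for x
    unfolding A0_def A1_def F_def Tr_def by (subst mu_if) simp
  have s: "bn_sigma par p x v = B0 + B1 * of_bool (x (the (par v)))" for x
    unfolding B0_def B1_def F_def Tr_def by (subst sigma_if) simp
  have spos: "bn_sigma par p x v > 0" for x
    using mu01[rule_format, of x] by (simp add: bn_sigma_def)
  have lit: "of_bool (x v) = bn_mu par p x v + bn_sigma par p x v * bn_phi par p v x" for x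
    using spos[of x] by (simp add: bn_phi_def)
  have "0 \<le> A0 \<and> A0 \<le> 1" using mu01[rule_format, of F] unfolding A0_def by simp
  moreover have "\<bar>B0\<bar> \<le> 1"
  proof -
    have "bn_mu par p F v * (1 - bn_mu par p F v) \<le> 1 * 1"
      using mu01[rule_format, of F] by (intro mult_mono) auto
    then have "sqrt (bn_mu par p F v * (1 - bn_mu par p F v)) \<le> 1" by simp
    moreover have "0 \<le> bn_mu par p F v * (1 - bn_mu par p F v)" using mu01[rule_format, of F] by simp
    ultimately show ?thesis unfolding B0_def bn_sigma_def by simp
  qed
  moreover have "\<bar>A1\<bar> \<le> \<alpha> \<and> \<bar>B1\<bar> \<le> \<alpha>" unfolding A1_def B1_def using db by blast
  moreover have "par v = None \<longrightarrow> A1 = 0 \<and> B1 = 0"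
    unfolding A1_def B1_def bn_sigma_def by (simp add: root_const[where x=Tr and y=F])
  moreover have "\<forall>x. of_bool (x v) = A0 + A1 * of_bool (x (the (par v))) + (B0 + B1 * of_bool (x (the (par v)))) * bn_phi par p v x"
    using lit m s by simp
  ultimately show ?thesis by (intro exI[of _ A0] exI[of _ A1] exI[of _ B0] exI[of _ B1]) blast
qed

lemma conj_indep: "v \<notin> T0 \<Longrightarrow> v \<notin> T1 \<Longrightarrow> indep v (conjunction T0 T1)"
  unfolding indep_def
proof (intro allI)
  fix x :: "nat \<Rightarrow> bool" and b
  assume a: "v \<notin> T0" "v \<notin> T1"
  have "(\<Prod>i\<in>T1. of_bool ((x(v:=b)) i)) = (\<Prod>i\<in>T1. (of_bool (x i) :: real))"
    using a by (intro prod.cong) auto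
  moreover have "(\<Prod>i\<in>T0. 1 - of_bool ((x(v:=b)) i)) = (\<Prod>i\<in>T0. 1 - (of_bool (x i) :: real))"
    using a by (intro prod.cong) auto
  ultimately show "conjunction T0 T1 (x(v:=b)) = conjunction T0 T1 x" unfolding conjunction_def by simp
qed

lemma conj_ins1: "finite T1 \<Longrightarrow> conjunction T0 (insert u T1) x = conjunction T0 T1 x * of_bool (x u)"
  unfolding conjunction_def by (cases "u \<in> T1") (simp_all add: insert_absorb prod.insert mult_ac, blast?)

lemma conj_ins0: "finite T0 \<Longrightarrow> conjunction (insert u T0) T1 x = conjunction T0 T1 x * (1 - of_bool (x u))"
  unfolding conjunction_def by (cases "u \<in> T0") (simp_all add: insert_absorb prod.insert mult_ac, blast?)

lemma conj_zero: "finite T0 \<Longrightarrow> finite T1 \<Longrightarrow> v \<in> T0 \<Longrightarrow> v \<in> T1 \<Longrightarrow> conjunction T0 T1 x = 0"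
  unfolding conjunction_def by (cases "x v") (simp_all add: prod_zero_iff, blast+)



lemma (in leafctx) gen_step:
  assumes ig: "indep v g" and gb: "L1V par p V g \<le> K ^ d"
    and l: "\<And>x. l x = A0 + A1 * of_bool (x (the (par v))) + (B0 + B1 * of_bool (x (the (par v)))) * bn_phi par p v x"
    and a0: "\<bar>A0\<bar> \<le> 1" and b0: "\<bar>B0\<bar> \<le> 1" and a1: "\<bar>A1\<bar> \<le> \<alpha>" and b1: "\<bar>B1\<bar> \<le> \<alpha>"
    and rt: "par v = None \<longrightarrow> A1 = 0 \<and> B1 = 0"
    and hs: "par v \<noteq> None \<Longrightarrow> indep v (\<lambda>x. g x * of_bool (x (the (par v)))) \<and> L1V par p V (\<lambda>x. g x * of_bool (x (the (par v)))) \<le> K ^ Suc d"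
    and K1: "1 \<le> K" and K2: "2 + 2 * \<alpha> * K \<le> K" and al: "0 \<le> \<alpha>"
  shows "L1V par p (insert v V) (\<lambda>x. g x * l x) \<le> K ^ Suc d"
proof (cases "par v = None")
  case True
  then have z: "A1 = 0" "B1 = 0" using rt by auto
  show ?thesis
    by (rule step[OF ig ig _ gb _ a0 b0 a1 b1 K1 K2 al])
       (simp_all add: l z algebra_simps)
next
  case False
  show ?thesis
    by (rule step[OF ig conjunct1[OF hs[OF False]] _ gb _ a0 b0 a1 b1 K1 K2 al])
       (use hs[OF False] in \<open>simp_all add: l algebra_simps\<close>)
qed

lemma main:
  fixes r :: "nat \<Rightarrow> nat"
  assumes "finite V"
    and "\<forall>w\<in>V. \<forall>u. par w = Some u \<longrightarrow> u \<in> V \<and> r u < r w"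
    and "\<forall>w\<in>V. \<forall>x. 0 < bn_mu par p x w \<and> bn_mu par p x w < 1"
    and "\<forall>w\<in>V. \<forall>x y. \<bar>bn_mu par p x w - bn_mu par p y w\<bar> \<le> \<alpha> \<and> \<bar>bn_sigma par p x w - bn_sigma par p y w\<bar> \<le> \<alpha>"
    and "T0 \<subseteq> V" "T1 \<subseteq> V"
    and K1: "1 \<le> K" and K2: "2 + 2 * \<alpha> * K \<le> K" and al: "0 \<le> \<alpha>"
  shows "L1V par p V (conjunction T0 T1) \<le> K ^ card (T0 \<union> T1)"
  using assms(1-6)
proof (induction V arbitrary: T0 T1 rule: finite_psubset_induct)
  case (psubset V)
  note H1 = psubset.prems(1) and H3 = psubset.prems(2) and H4 = psubset.prems(3)
  show ?case
  proof (cases "V = {}")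
    case True
    then have "T0 = {}" "T1 = {}" using psubset.prems by auto
    then show ?thesis using True by (simp add: L1V_def coeffV_def EV_def probV_def conjunction_def bn_phiS_def)
  next
    case False
    define m where "m = Max (r ` V)"
    have "m \<in> r ` V" unfolding m_def using psubset.hyps(1) False by (intro Max_in) auto
    then obtain v where v: "v \<in> V" "r v = m" by auto
    have vmax: "\<forall>w\<in>V. r w \<le> r v" unfolding v(2) m_def using psubset.hyps(1) by auto
    define W where "W = V - {v}"
    have VW: "V = insert v W" "v \<notin> W" "finite W" "W \<subset> V"
      unfolding W_def using v psubset.hyps(1) by auto
    have WV: "W \<subseteq> V" unfolding W_def by auto
    have leafW: "\<forall>w\<in>W. par w \<noteq> Some v"
    proof
      fix w assume "w \<in> W"
      then have wV: "w \<in> V" unfolding W_def by simp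
      show "par w \<noteq> Some v"
      proof
        assume "par w = Some v"
        then have "r v < r w" using H1 wV by blast
        moreover have "r w \<le> r v" using vmax wV by blast
        ultimately show False by simp
      qed
    qed
    have pv: "par v \<noteq> Some v"
    proof
      assume "par v = Some v"
      then have "r v < r v" using H1 v(1) by blast
      then show False by simp
    qed
    have mv: "\<forall>x. 0 < bn_mu par p x v \<and> bn_mu par p x v < 1" using H3 v(1) by blast
    have dv: "\<forall>x y. \<bar>bn_mu par p x v - bn_mu par p y v\<bar> \<le> \<alpha> \<and> \<bar>bn_sigma par p x v - bn_sigma par p y v\<bar> \<le> \<alpha>"
      using H4 v(1) by blast
    have lc: "leafctx par p W v"
      unfolding leafctx_def using VW(2,3) leafW pv mv by blast
    have H1W: "\<forall>w\<in>W. \<forall>u. par w = Some u \<longrightarrow> u \<in> W \<and> r u < r w"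
    proof (intro ballI allI impI)
      fix w u assume wW: "w \<in> W" and pu: "par w = Some u"
      have wV: "w \<in> V" using wW WV by blast
      have "u \<in> V \<and> r u < r w" using H1 wV pu by blast
      moreover have "u \<noteq> v" using leafW wW pu by blast
      ultimately show "u \<in> W \<and> r u < r w" unfolding W_def by blast
    qed
    have H3W: "\<forall>w\<in>W. \<forall>x. 0 < bn_mu par p x w \<and> bn_mu par p x w < 1" using H3 WV by blast
    have H4W: "\<forall>w\<in>W. \<forall>x y. \<bar>bn_mu par p x w - bn_mu par p y w\<bar> \<le> \<alpha> \<and> \<bar>bn_sigma par p x w - bn_sigma par p y w\<bar> \<le> \<alpha>"
      using H4 WV by blast
    have IH: "L1V par p W (conjunction A B) \<le> K ^ card (A \<union> B)" if "A \<subseteq> W" "B \<subseteq> W" for A B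
      using psubset.IH[OF VW(4) H1W H3W H4W that] .
    have finT: "finite T0" "finite T1" using psubset.prems(4,5) psubset.hyps(1) by (auto dest: finite_subset)
    from lit_decomp[OF mv dv] obtain A0 A1 B0 B1 where L: "0 \<le> A0 \<and> A0 \<le> 1 \<and> \<bar>B0\<bar> \<le> 1 \<and> \<bar>A1\<bar> \<le> \<alpha> \<and> \<bar>B1\<bar> \<le> \<alpha> \<and>
     (par v = None \<longrightarrow> A1 = 0 \<and> B1 = 0) \<and>
     (\<forall>x. of_bool (x v) = A0 + A1 * of_bool (x (the (par v))) + (B0 + B1 * of_bool (x (the (par v)))) * bn_phi par p v x)"
      by (elim exE) (erule that)
    have lit: "0 \<le> A0" "A0 \<le> 1" "\<bar>B0\<bar> \<le> 1" "\<bar>A1\<bar> \<le> \<alpha>" "\<bar>B1\<bar> \<le> \<alpha>"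
      "par v = None \<longrightarrow> A1 = 0 \<and> B1 = 0" using L by simp_all
    have lit7: "\<And>x. of_bool (x v) = A0 + A1 * of_bool (x (the (par v))) + (B0 + B1 * of_bool (x (the (par v)))) * bn_phi par p v x"
      using L by blast
    have uW: "the (par v) \<in> W" if "par v \<noteq> None"
      using that H1 v(1) pv unfolding W_def by auto
    consider (out) "v \<notin> T0" "v \<notin> T1" | (both) "v \<in> T0" "v \<in> T1" | (in1) "v \<in> T1" "v \<notin> T0" | (in0) "v \<in> T0" "v \<notin> T1"
      by blast
    then show ?thesis
    proof cases
      case out
      have "L1V par p V (conjunction T0 T1) = L1V par p W (conjunction T0 T1)"
        unfolding VW(1) by (rule leafctx.P1[OF lc conj_indep[OF out]])
      also have "\<dots> \<le> K ^ card (T0 \<union> T1)"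
        using IH[of T0 T1] out psubset.prems(4,5) unfolding W_def by auto
      finally show ?thesis .
    next
      case both
      have "conjunction T0 T1 = (\<lambda>x. 0 * conjunction T0 T1 x)"
        using conj_zero[OF finT both] by (auto simp: fun_eq_iff)
      then have "L1V par p V (conjunction T0 T1) = 0" by (metis L1V_scale abs_zero mult_zero_left)
      then show ?thesis using K1 by simp
    next
      case in1
      define T1' where "T1' = T1 - {v}"
      define g where "g = conjunction T0 T1'"
      have fT1': "finite T1'" using finT unfolding T1'_def by auto
      have feq: "conjunction T0 T1 = (\<lambda>x. g x * of_bool (x v))"
      proof -
        have "T1 = insert v T1'" unfolding T1'_def using in1 by auto
        then show ?thesis unfolding g_def using conj_ins1[OF fT1'] by (auto simp: fun_eq_iff)
      qed
      have card: "card (T0 \<union> T1) = Suc (card (T0 \<union> T1'))"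
      proof -
        have "T0 \<union> T1 = insert v (T0 \<union> T1')" "v \<notin> T0 \<union> T1'" unfolding T1'_def using in1 by auto
        then show ?thesis using finT fT1' by simp
      qed
      have sub: "T0 \<subseteq> W" "T1' \<subseteq> W" unfolding W_def T1'_def using in1 psubset.prems(4,5) by auto
      have ig: "indep v g" unfolding g_def T1'_def using in1 by (intro conj_indep) auto
      have "L1V par p (insert v W) (\<lambda>x. g x * of_bool (x v)) \<le> K ^ Suc (card (T0 \<union> T1'))"
      proof (rule leafctx.gen_step[OF lc ig _ lit7 _ lit(3) lit(4) lit(5) lit(6) _ K1 K2 al])
        show "L1V par p W g \<le> K ^ card (T0 \<union> T1')" unfolding g_def using IH sub by blast
        show "\<bar>A0\<bar> \<le> 1" using lit by simp
      next
        assume pn: "par v \<noteq> None"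
        let ?u = "the (par v)"
        have he: "(\<lambda>x. g x * of_bool (x ?u)) = conjunction T0 (insert ?u T1')"
          unfolding g_def using conj_ins1[OF fT1'] by (auto simp: fun_eq_iff)
        have "v \<noteq> ?u" using uW[OF pn] VW by auto
        then have "indep v (conjunction T0 (insert ?u T1'))"
          using in1 unfolding T1'_def by (intro conj_indep) auto
        moreover have "L1V par p W (conjunction T0 (insert ?u T1')) \<le> K ^ Suc (card (T0 \<union> T1'))"
        proof -
          have "L1V par p W (conjunction T0 (insert ?u T1')) \<le> K ^ card (T0 \<union> insert ?u T1')"
            by (rule IH) (use sub uW[OF pn] in auto)
          also have "\<dots> \<le> K ^ Suc (card (T0 \<union> T1'))"
          proof (rule power_increasing[OF _ K1])
            have "card (insert ?u (T0 \<union> T1')) \<le> Suc (card (T0 \<union> T1'))"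
              by (simp add: card_insert_le_m1 card_insert_if finT fT1')
            then show "card (T0 \<union> insert ?u T1') \<le> Suc (card (T0 \<union> T1'))" by simp
          qed
          finally show ?thesis .
        qed
        ultimately show "indep v (\<lambda>x. g x * of_bool (x ?u)) \<and> L1V par p W (\<lambda>x. g x * of_bool (x ?u)) \<le> K ^ Suc (card (T0 \<union> T1'))"
          unfolding he by simp
      qed
      then show ?thesis unfolding feq card VW(1)[symmetric] .
    next
      case in0
      define T0' where "T0' = T0 - {v}"
      define g where "g = conjunction T0' T1"
      have fT0': "finite T0'" using finT unfolding T0'_def by auto
      have feq: "conjunction T0 T1 = (\<lambda>x. g x * (1 - of_bool (x v)))"
      proof -
        have "T0 = insert v T0'" unfolding T0'_def using in0 by auto
        then show ?thesis unfolding g_def using conj_ins0[OF fT0'] by (auto simp: fun_eq_iff)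
      qed
      have card: "card (T0 \<union> T1) = Suc (card (T0' \<union> T1))"
      proof -
        have "T0 \<union> T1 = insert v (T0' \<union> T1)" "v \<notin> T0' \<union> T1" unfolding T0'_def using in0 by auto
        then show ?thesis using finT fT0' by simp
      qed
      have sub: "T0' \<subseteq> W" "T1 \<subseteq> W" unfolding W_def T0'_def using in0 psubset.prems(4,5) by auto
      have ig: "indep v g" unfolding g_def T0'_def using in0 by (intro conj_indep) auto
      have l0: "1 - of_bool (x v) = (1 - A0) + (- A1) * of_bool (x (the (par v))) + ((- B0) + (- B1) * of_bool (x (the (par v)))) * bn_phi par p v x" for x :: "nat \<Rightarrow> bool"
        unfolding lit7[of x] by (simp add: algebra_simps)
      have "L1V par p (insert v W) (\<lambda>x. g x * (1 - of_bool (x v))) \<le> K ^ Suc (card (T0' \<union> T1))"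
      proof (rule leafctx.gen_step[OF lc ig _ l0 _ _ _ _ _ _ K1 K2 al])
        show "L1V par p W g \<le> K ^ card (T0' \<union> T1)" unfolding g_def using IH sub by blast
        show "\<bar>1 - A0\<bar> \<le> 1" using lit by simp
        show "\<bar>- B0\<bar> \<le> 1" "\<bar>- A1\<bar> \<le> \<alpha>" "\<bar>- B1\<bar> \<le> \<alpha>" using lit by simp_all
        show "par v = None \<longrightarrow> - A1 = 0 \<and> - B1 = 0" using lit by simp
      next
        assume pn: "par v \<noteq> None"
        let ?u = "the (par v)"
        have fT1: "finite T1" using finT by simp
        have he: "(\<lambda>x. g x * of_bool (x ?u)) = conjunction T0' (insert ?u T1)"
          unfolding g_def using conj_ins1[OF fT1] by (auto simp: fun_eq_iff)
        have "v \<noteq> ?u" using uW[OF pn] VW by auto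
        then have "indep v (conjunction T0' (insert ?u T1))"
          using in0 unfolding T0'_def by (intro conj_indep) auto
        moreover have "L1V par p W (conjunction T0' (insert ?u T1)) \<le> K ^ Suc (card (T0' \<union> T1))"
        proof -
          have "L1V par p W (conjunction T0' (insert ?u T1)) \<le> K ^ card (T0' \<union> insert ?u T1)"
            by (rule IH) (use sub uW[OF pn] in auto)
          also have "\<dots> \<le> K ^ Suc (card (T0' \<union> T1))"
          proof (rule power_increasing[OF _ K1])
            have "card (insert ?u (T0' \<union> T1)) \<le> Suc (card (T0' \<union> T1))"
              by (simp add: card_insert_le_m1 card_insert_if finT fT0')
            then show "card (T0' \<union> insert ?u T1) \<le> Suc (card (T0' \<union> T1))" by simp
          qed
          finally show ?thesis .
        qed
        ultimately show "indep v (\<lambda>x. g x * of_bool (x ?u)) \<and> L1V par p W (\<lambda>x. g x * of_bool (x ?u)) \<le> K ^ Suc (card (T0' \<union> T1))"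
          unfolding he by simp
      qed
      then show ?thesis unfolding feq card VW(1)[symmetric] .
    qed
  qed
qed


lemma sqdiv: "(c::real) \<noteq> 0 \<Longrightarrow> a^2 / c = (a/c)^2 * c"
  by (simp add: power2_eq_square)

theorem mainTheorem7:
  fixes \<alpha> :: real and n d :: nat and par :: "nat \<Rightarrow> nat option"
    and p :: "nat \<Rightarrow> bool \<Rightarrow> real" and T0 T1 :: "nat set"
  assumes "0 \<le> \<alpha>" and "\<alpha> < 1/2"
    and "is_tree n par" and "cpt_open n par p" and "diff_bounded \<alpha> n par p"
    and "T0 \<subseteq> {0..<n}" and "T1 \<subseteq> {0..<n}" and "T0 \<inter> T1 = {}"
    and "card (T0 \<union> T1) = d"
  shows "bn_L1 n par p (conjunction T0 T1) \<le> ((2 - 2*\<alpha>) / (1 - 2*\<alpha>)) ^ (2*d)"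
proof -
  define K where "K = ((2 - 2*\<alpha>) / (1 - 2*\<alpha>)) ^ 2"
  have t: "0 < 1 - 2*\<alpha>" using assms(2) by simp
  have q1: "1 \<le> (2 - 2*\<alpha>) / (1 - 2*\<alpha>)" using t by simp
  have K1: "1 \<le> K" unfolding K_def using q1 by (simp add: one_le_power)
  have sq: "(2 - 2*\<alpha>)^2 = 2*(1 - 2*\<alpha>) + (1 + (1 - 2*\<alpha>)^2)" by (simp add: power2_eq_square algebra_simps)
  have "2*(1 - 2*\<alpha>) \<le> (2 - 2*\<alpha>)^2" unfolding sq by (simp add: add_nonneg_nonneg)
  then have "2 \<le> (2 - 2*\<alpha>)^2 / (1 - 2*\<alpha>)" using t by (simp add: pos_le_divide_eq mult.commute)
  also have "(2 - 2*\<alpha>)^2 / (1 - 2*\<alpha>) = K * (1 - 2*\<alpha>)" unfolding K_def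
    using sqdiv[of "1 - 2*\<alpha>" "2 - 2*\<alpha>"] t by simp
  finally have K2: "2 + 2 * \<alpha> * K \<le> K" by (simp add: algebra_simps)
  obtain r :: "nat \<Rightarrow> nat" where r: "\<forall>v<n. \<forall>u. par v = Some u \<longrightarrow> r u < r v"
    using assms(3) unfolding is_tree_def by blast
  have H1: "\<forall>w\<in>{0..<n}. \<forall>u. par w = Some u \<longrightarrow> u \<in> {0..<n} \<and> r u < r w"
    using r assms(3) unfolding is_tree_def by auto
  have H3: "\<forall>w\<in>{0..<n}. \<forall>x. 0 < bn_mu par p x w \<and> bn_mu par p x w < 1"
  proof (intro ballI allI)
    fix w x assume "w \<in> {0..<n}"
    then have w: "w < n" by simp
    show "0 < bn_mu par p x w \<and> bn_mu par p x w < 1"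
    proof (cases "par w")
      case None
      then show ?thesis using assms(4) w unfolding cpt_open_def bn_mu_def pa_val_def by simp
    next
      case (Some u)
      then show ?thesis using assms(4) w unfolding cpt_open_def bn_mu_def by simp
    qed
  qed
  have H4: "\<forall>w\<in>{0..<n}. \<forall>x y. \<bar>bn_mu par p x w - bn_mu par p y w\<bar> \<le> \<alpha> \<and> \<bar>bn_sigma par p x w - bn_sigma par p y w\<bar> \<le> \<alpha>"
    using assms(5) unfolding diff_bounded_def by simp
  have "L1V par p {0..<n} (conjunction T0 T1) \<le> K ^ card (T0 \<union> T1)"
    by (rule main[OF _ H1 H3 H4 assms(6,7) K1 K2 assms(1)]) simp
  moreover have "bn_L1 n par p (conjunction T0 T1) = L1V par p {0..<n} (conjunction T0 T1)"
    unfolding bn_L1_def L1V_def bn_coeff_def coeffV_def bn_expect_def EV_def cube_def bn_prob_def probV_def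
    by (simp add: atLeast0LessThan)
  moreover have "K ^ card (T0 \<union> T1) = ((2 - 2*\<alpha>) / (1 - 2*\<alpha>)) ^ (2*d)"
    unfolding K_def assms(9) by (simp add: power_mult)
  ultimately show ?thesis by simp
qed

end
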